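(* Let $\Phi$ be a Leonard system in $\mathcal A$ with parameter array $(\theta_i,\theta^*_i,i=0..d;\varphi_j,\phi_j,j=1..d)$ and scalars $k_i$ as defined below. Then $$k_i=\frac{\varphi_1\varphi_2\cdots\varphi_i}{\phi_1\phi_2\cdots\phi_i}\cdot\frac{\eta^*_d(\theta^*_0)}{\tau^*_i(\theta^*_i)\,\eta^*_{d-i}(\theta^*_i)}\qquad(0\le i\le d).$$
   Context: Let $\mathbb K$ be a field, $d\ge 0$ an integer, and $\mathcal A$ a $\mathbb K$-algebra isomorphic to $\mathrm{Mat}_{d+1}(\mathbb K)$, with identity $I$ and trace $\mathrm{tr}$. An element $A\in\mathcal A$ is multiplicity-free if it has $d+1$ mutually distinct eigenvalues in $\mathbb K$; if $\theta_0,\dots,\theta_d$ is an ordering of them, the primitive idempotent of $A$ associated with $\theta_i$ is $E_i=\prod_{j\ne i}(A-\theta_jI)/(\theta_i-\theta_j)$. A Leonard system in $\mathcal A$ is a sequence $\Phi=(A;A^*;\{E_i\}_{i=0}^d;\{E^*_i\}_{i=0}^d)$ such that: (i) $A,A^*$ are multiplicity-free; (ii) $E_0,\dots,E_d$ is an ordering of the primitive idempotents of $A$; (iii) $E^*_0,\dots,E^*_d$ is an ordering of those of $A^*$; (iv) $E_iA^*E_j=0$ if $|i-j|>1$ and $\ne0$ if $|i-j|=1$ $(0\le i,j\le d)$; (v) $E^*_iAE^*_j=0$ if $|i-j|>1$ and $\neq0$ if $|i-j|=1$ $(0\le i,j\le d)$. $\theta_i$ (resp. $\theta^*_i$) is the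 eigenvalue of $A$ (resp. $A^*$) for $E_i$ (resp. $E^*_i$). Define $\nu=\mathrm{tr}(E_0E^*_0)^{-1}$ (the trace is nonzero) and $k_i=\nu\,\mathrm{tr}(E^*_iE_0)$ $(0\le i\le d)$. It is known that there exist unique nonzero scalars $\varphi_1,\dots,\varphi_d\in\mathbb K$ (first split sequence) such that for some $\mathbb K$-algebra isomorphism $\natural:\mathcal A\to\mathrm{Mat}_{d+1}(\mathbb K)$, $A^\natural$ is lower bidiagonal with diagonal $\theta_0,\dots,\theta_d$ and subdiagonal entries all $1$, and $A^{*\natural}$ is upper bidiagonal with diagonal $\theta^*_0,\dots,\theta^*_d$ and $(A^{*\natural})_{i-1,i}=\varphi_i$. The second split sequence $\phi_1,\dots,\phi_d$ is the first split sequence of $(A;A^*;\{E_{d-i}\}_{i=0}^d;\{E^*_i\}_{i=0}^d)$. Polynomials: $\tau^*_i=\prod_{h=0}^{i-1}(\lambda-\theta^*_h)$, $\eta^*_i=\prod_{h=0}^{i-1}(\lambda-\theta^*_{d-h})$. Empty products equal $1$. *)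

theory Defs
  imports "Jordan_Normal_Form.Char_Poly"
begin

text \<open>We take the algebra to be Mat_{d+1}(K) itself (n = d+1).\<close>

definition mult_free :: "nat \<Rightarrow> 'a::field mat \<Rightarrow> bool" where
  "mult_free d A \<longleftrightarrow> A \<in> carrier_mat (Suc d) (Suc d) \<and> card {k. eigenvalue A k} = Suc d"

definition eig_ordering :: "nat \<Rightarrow> 'a::field mat \<Rightarrow> (nat \<Rightarrow> 'a) \<Rightarrow> bool" where
  "eig_ordering d A th \<longleftrightarrow> bij_betw th {..d} {k. eigenvalue A k}"

definition prim_idem :: "nat \<Rightarrow> (nat \<Rightarrow> 'a::field) \<Rightarrow> 'a mat \<Rightarrow> nat \<Rightarrow> 'a mat" where
  "prim_idem d th A i =
     foldr (\<lambda>j M. ((1 / (th i - th j)) \<cdot>\<^sub>m (A - th j \<cdot>\<^sub>m 1\<^sub>m (Suc d))) * M)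
           (filter (\<lambda>j. j \<noteq> i) [0..<Suc d]) (1\<^sub>m (Suc d))"

definition idem_ordering :: "nat \<Rightarrow> 'a::field mat \<Rightarrow> (nat \<Rightarrow> 'a mat) \<Rightarrow> bool" where
  "idem_ordering d A E \<longleftrightarrow>
     (\<exists>th. eig_ordering d A th \<and> (\<forall>i\<le>d. E i = prim_idem d th A i))"

definition tridiag_cond :: "nat \<Rightarrow> (nat \<Rightarrow> 'a::field mat) \<Rightarrow> 'a mat \<Rightarrow> bool" where
  "tridiag_cond d E B \<longleftrightarrow>
     (\<forall>i\<le>d. \<forall>j\<le>d.
        (i > j + 1 \<or> j > i + 1 \<longrightarrow> E i * B * E j = 0\<^sub>m (Suc d) (Suc d)) \<and>
        (i = j + 1 \<or> j = i + 1 \<longrightarrow> E i * B * E j \<noteq> 0\<^sub>m (Suc d) (Suc d)))"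

definition leonard_system ::
  "nat \<Rightarrow> 'a::field mat \<Rightarrow> 'a mat \<Rightarrow> (nat \<Rightarrow> 'a mat) \<Rightarrow> (nat \<Rightarrow> 'a mat) \<Rightarrow> bool" where
  "leonard_system d A As E Es \<longleftrightarrow>
     mult_free d A \<and> mult_free d As \<and>
     idem_ordering d A E \<and> idem_ordering d As Es \<and>
     tridiag_cond d E As \<and> tridiag_cond d Es A"

definition alg_iso :: "nat \<Rightarrow> ('a::field mat \<Rightarrow> 'a mat) \<Rightarrow> bool" where
  "alg_iso d h \<longleftrightarrow>
     bij_betw h (carrier_mat (Suc d) (Suc d)) (carrier_mat (Suc d) (Suc d)) \<and>
     (\<forall>X\<in>carrier_mat (Suc d) (Suc d). \<forall>Y\<in>carrier_mat (Suc d) (Suc d).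
        h (X + Y) = h X + h Y \<and> h (X * Y) = h X * h Y) \<and>
     (\<forall>c. \<forall>X\<in>carrier_mat (Suc d) (Suc d). h (c \<cdot>\<^sub>m X) = c \<cdot>\<^sub>m h X) \<and>
     h (1\<^sub>m (Suc d)) = 1\<^sub>m (Suc d)"

definition lower_bidiag :: "nat \<Rightarrow> (nat \<Rightarrow> 'a::field) \<Rightarrow> 'a mat" where
  "lower_bidiag d th = mat (Suc d) (Suc d)
     (\<lambda>(r, c). if r = c then th r else if r = c + 1 then 1 else 0)"

definition upper_bidiag :: "nat \<Rightarrow> (nat \<Rightarrow> 'a::field) \<Rightarrow> (nat \<Rightarrow> 'a) \<Rightarrow> 'a mat" where
  "upper_bidiag d ths ph = mat (Suc d) (Suc d)
     (\<lambda>(r, c). if r = c then ths r else if c = r + 1 then ph c else 0)"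

definition split_seq ::
  "nat \<Rightarrow> 'a::field mat \<Rightarrow> 'a mat \<Rightarrow> (nat \<Rightarrow> 'a) \<Rightarrow> (nat \<Rightarrow> 'a) \<Rightarrow> (nat \<Rightarrow> 'a) \<Rightarrow> bool" where
  "split_seq d A As th ths ph \<longleftrightarrow>
     (\<forall>j\<in>{1..d}. ph j \<noteq> 0) \<and>
     (\<exists>h. alg_iso d h \<and> h A = lower_bidiag d th \<and> h As = upper_bidiag d ths ph)"

definition tau_star :: "(nat \<Rightarrow> 'a::field) \<Rightarrow> nat \<Rightarrow> 'a \<Rightarrow> 'a" where
  "tau_star ths i x = (\<Prod>h<i. x - ths h)"

definition eta_star :: "nat \<Rightarrow> (nat \<Rightarrow> 'a::field) \<Rightarrow> nat \<Rightarrow> 'a \<Rightarrow> 'a" where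
  "eta_star d ths i x = (\<Prod>h<i. x - ths (d - h))"

definition mtrace :: "'a::field mat \<Rightarrow> 'a" where
  "mtrace M = (\<Sum>i<dim_row M. M $$ (i, i))"

definition nu :: "('a::field mat) \<Rightarrow> 'a mat \<Rightarrow> 'a" where
  "nu E0 Es0 = inverse (mtrace (E0 * Es0))"

definition kk :: "nat \<Rightarrow> (nat \<Rightarrow> 'a::field mat) \<Rightarrow> (nat \<Rightarrow> 'a mat) \<Rightarrow> nat \<Rightarrow> 'a" where
  "kk d E Es i = nu (E 0) (Es 0) * mtrace (Es i * E 0)"

end

theory Submission
  imports Defs
begin


definition outer :: "'a::field vec \<Rightarrow> 'a vec \<Rightarrow> 'a mat" where
  "outer u w = mat (dim_vec u) (dim_vec w) (\<lambda>(r,c). u$r * w$c)"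

lemma outer_carrier[simp]: "u \<in> carrier_vec n \<Longrightarrow> w \<in> carrier_vec m \<Longrightarrow> outer u w \<in> carrier_mat n m"
  unfolding outer_def by auto

lemma outer_mult_vec:
  assumes "u \<in> carrier_vec n" "w \<in> carrier_vec n" "v \<in> carrier_vec n"
  shows "outer u w *\<^sub>v v = (w \<bullet> v) \<cdot>\<^sub>v u"
  using assms by (auto simp: outer_def mult_mat_vec_def scalar_prod_def intro!: eq_vecI)
    (simp add: sum_distrib_left ac_simps)

lemma mat_mult_outer:
  assumes "X \<in> carrier_mat n n" "u \<in> carrier_vec n" "w \<in> carrier_vec m"
  shows "X * outer u w = outer (X *\<^sub>v u) w"
  using assms by (auto simp: outer_def mult_mat_vec_def scalar_prod_def sum_distrib_right
      intro!: eq_matI sum.cong)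

lemma outer_mult_mat:
  assumes "Y \<in> carrier_mat n n" "u \<in> carrier_vec m" "w \<in> carrier_vec n"
  shows "outer u w * Y = outer u (Y\<^sup>T *\<^sub>v w)"
  using assms by (auto simp: outer_def mult_mat_vec_def scalar_prod_def sum_distrib_left
      intro!: eq_matI sum.cong)

lemma outer_smult: "outer (c \<cdot>\<^sub>v u) w = c \<cdot>\<^sub>m outer u w"
  by (auto simp: outer_def intro!: eq_matI)

lemma outer_sandwich:
  assumes "M \<in> carrier_mat n n" "u \<in> carrier_vec n" "w \<in> carrier_vec n"
  shows "outer u w * M * outer u w = (w \<bullet> (M *\<^sub>v u)) \<cdot>\<^sub>m outer u w"
proof -
  have "outer u w * M \<in> carrier_mat n n" using assms by (meson mult_carrier_mat outer_carrier)
  hence "outer u w * M * outer u w = outer ((outer u w * M) *\<^sub>v u) w"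
    using assms mat_mult_outer[of "outer u w * M" n u w n] by blast
  also have "(outer u w * M) *\<^sub>v u = outer u w *\<^sub>v (M *\<^sub>v u)"
    using assms by (meson assoc_mult_mat_vec outer_carrier)
  also have "\<dots> = (w \<bullet> (M *\<^sub>v u)) \<cdot>\<^sub>v u" using assms by (auto intro!: outer_mult_vec)
  finally show ?thesis by (simp add: outer_smult)
qed

lemma mtrace_comm:
  assumes "X \<in> carrier_mat n n" "Y \<in> carrier_mat n n"
  shows "mtrace (X * Y) = mtrace (Y * X)"
proof -
  have "mtrace (X * Y) = (\<Sum>i<n. \<Sum>k<n. X $$ (i,k) * Y $$ (k,i))"
    using assms by (auto simp: mtrace_def scalar_prod_def atLeast0LessThan intro!: sum.cong)
  also have "\<dots> = (\<Sum>k<n. \<Sum>i<n. Y $$ (k,i) * X $$ (i,k))"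
    by (subst sum.swap) (simp add: mult.commute)
  also have "\<dots> = mtrace (Y * X)"
    using assms by (auto simp: mtrace_def scalar_prod_def atLeast0LessThan intro!: sum.cong)
  finally show ?thesis .
qed

lemma mtrace_smult: "X \<in> carrier_mat n n \<Longrightarrow> mtrace (c \<cdot>\<^sub>m X) = c * mtrace X"
  by (simp add: mtrace_def sum_distrib_left)

lemma mtrace_outer:
  assumes "u \<in> carrier_vec n" "w \<in> carrier_vec n"
  shows "mtrace (outer u w) = w \<bullet> u"
  using assms by (auto simp: mtrace_def outer_def scalar_prod_def atLeast0LessThan mult.commute intro!: sum.cong)

lemma mat_unit_col: fixes E :: "'a::field mat" assumes "E \<in> carrier_mat n n" "l < n" shows "E *\<^sub>v unit_vec n l = col E l"
proof (rule eq_vecI)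
  fix i assume "i < dim_vec (col E l)"
  hence i: "i < n" using assms by auto
  have "row E i \<bullet> unit_vec n l = (row E i) $ l" by (rule scalar_prod_right_unit) fact
  thus "(E *\<^sub>v unit_vec n l) $ i = col E l $ i" using assms i by auto
qed (use assms in auto)

lemma rank_one_trace:
  assumes E: "E \<in> carrier_mat n n" and nz: "E \<noteq> 0\<^sub>m n n"
    and R: "\<And>M. M \<in> carrier_mat n n \<Longrightarrow> \<exists>s. E * M * E = s \<cdot>\<^sub>m E"
    and M: "M \<in> carrier_mat n n" and s: "E * M * E = s \<cdot>\<^sub>m E"
  shows "mtrace (M * E) = s"
proof -
  obtain k l where kl: "k < n" "l < n" "E $$ (k,l) \<noteq> 0"
    using nz E by (metis carrier_matD(1,2) eq_matI index_zero_mat(1,2,3))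
  define U :: "'a mat" where "U = outer (unit_vec n l) (unit_vec n k)"
  have U: "U \<in> carrier_mat n n" unfolding U_def by auto
  have cE: "col E l \<in> carrier_vec n" "row E k \<in> carrier_vec n" using E by auto
  have EU: "E * U = outer (col E l) (unit_vec n k)"
    unfolding U_def using E kl by (subst mat_mult_outer[of _ n _ _ n]) (auto simp: mat_unit_col)
  have tr: "E\<^sup>T *\<^sub>v unit_vec n k = row E k"
    using E kl by (subst mat_unit_col[of _ n]) auto
  have EUE: "E * U * E = outer (col E l) (row E k)"
    unfolding EU using E kl by (subst outer_mult_mat[of E n "col E l" n "unit_vec n k"]) (auto simp: tr)
  obtain s' where s': "E * U * E = s' \<cdot>\<^sub>m E" using R U by blast
  have "s' * E $$ (k,l) = E $$ (k,l) * E $$ (k,l)"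
    using arg_cong[OF s'[unfolded EUE], of "\<lambda>X. X $$ (k,l)"] E kl
    by (auto simp: outer_def)
  hence s'v: "s' = E $$ (k,l)" using kl by simp
  have t1: "mtrace (M * (E * U * E)) = s' * mtrace (M * E)"
    using M E by (simp only: s') (subst mult_smult_distrib[of _ n n], auto intro!: mtrace_smult)
  have t2: "mtrace (M * (E * U * E)) = row E k \<bullet> (M *\<^sub>v col E l)"
    unfolding EUE using M cE by (subst mat_mult_outer[of _ n]) (auto intro!: mtrace_outer)
  have a1: "E * M * E = E * (M * E)" using E M by (intro assoc_mult_mat) auto
  have a2: "(E * (M * E)) $$ (k,l) = row E k \<bullet> col (M * E) l" using E M kl by (intro index_mult_mat) auto
  have a3: "col (M * E) l = M *\<^sub>v col E l" using E M kl by (intro col_mult2) auto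
  have t3: "row E k \<bullet> (M *\<^sub>v col E l) = (E * M * E) $$ (k,l)" unfolding a1 a2 a3 ..
  have t4: "(E * M * E) $$ (k,l) = s * E $$ (k,l)" using s E kl by auto
  have "E $$ (k,l) * mtrace (M * E) = s * E $$ (k,l)" using t1 t2 t3 t4 s'v by auto
  thus ?thesis using kl by simp
qed



lemma smult_mat_mult_vec:
  fixes A :: "'a::field mat"
  assumes "A \<in> carrier_mat nr nc" "v \<in> carrier_vec nc"
  shows "(k \<cdot>\<^sub>m A) *\<^sub>v v = k \<cdot>\<^sub>v (A *\<^sub>v v)"
  using assms by (auto intro!: eq_vecI simp: scalar_prod_def sum_distrib_left ac_simps)

lemma transpose_smult: "(k \<cdot>\<^sub>m A)\<^sup>T = k \<cdot>\<^sub>m A\<^sup>T"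
  by (auto intro!: eq_matI)

lemma fac_vec:
  fixes B :: "'a::field mat"
  assumes B: "B \<in> carrier_mat n n" and v: "v \<in> carrier_vec n" and ev: "B *\<^sub>v v = t \<cdot>\<^sub>v v"
  shows "((c \<cdot>\<^sub>m (B - s \<cdot>\<^sub>m 1\<^sub>m n)) *\<^sub>v v) = (c * (t - s)) \<cdot>\<^sub>v v"
proof -
  have "(c \<cdot>\<^sub>m (B - s \<cdot>\<^sub>m 1\<^sub>m n)) *\<^sub>v v = c \<cdot>\<^sub>v ((B - s \<cdot>\<^sub>m 1\<^sub>m n) *\<^sub>v v)"
    using B v by (intro smult_mat_mult_vec[of _ n n]) auto
  also have "(B - s \<cdot>\<^sub>m 1\<^sub>m n) *\<^sub>v v = B *\<^sub>v v - (s \<cdot>\<^sub>m 1\<^sub>m n) *\<^sub>v v"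
    using B v by (intro minus_mult_distrib_mat_vec[of _ n n]) auto
  also have "(s \<cdot>\<^sub>m 1\<^sub>m n) *\<^sub>v v = s \<cdot>\<^sub>v v"
    using v by (subst smult_mat_mult_vec[of _ n n]) auto
  finally show ?thesis using ev v by (auto intro!: eq_vecI simp: algebra_simps)
qed

lemma foldr_fac_carrier:
  fixes B :: "'a::field mat"
  assumes "B \<in> carrier_mat n n"
  shows "foldr (\<lambda>j M. ((1 / (th i - th j)) \<cdot>\<^sub>m (B - th j \<cdot>\<^sub>m 1\<^sub>m n)) * M) xs (1\<^sub>m n) \<in> carrier_mat n n"
  using assms by (induction xs) auto

lemma prim_idem_carrier:
  "B \<in> carrier_mat (Suc d) (Suc d) \<Longrightarrow> prim_idem d th B i \<in> carrier_mat (Suc d) (Suc d)"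
  unfolding prim_idem_def by (rule foldr_fac_carrier)

lemma foldr_fac_vec:
  fixes B :: "'a::field mat"
  assumes B: "B \<in> carrier_mat n n" and v: "v \<in> carrier_vec n" and ev: "B *\<^sub>v v = t \<cdot>\<^sub>v v"
  shows "foldr (\<lambda>j M. ((1 / (th i - th j)) \<cdot>\<^sub>m (B - th j \<cdot>\<^sub>m 1\<^sub>m n)) * M) xs (1\<^sub>m n) *\<^sub>v v
     = prod_list (map (\<lambda>j. (1 / (th i - th j)) * (t - th j)) xs) \<cdot>\<^sub>v v"
proof (induction xs)
  case Nil
  then show ?case using v by auto
next
  case (Cons j xs)
  let ?F = "(1 / (th i - th j)) \<cdot>\<^sub>m (B - th j \<cdot>\<^sub>m 1\<^sub>m n)"
  let ?R = "foldr (\<lambda>j M. ((1 / (th i - th j)) \<cdot>\<^sub>m (B - th j \<cdot>\<^sub>m 1\<^sub>m n)) * M) xs (1\<^sub>m n)"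
  have F: "?F \<in> carrier_mat n n" using B by auto
  have R: "?R \<in> carrier_mat n n" using B by (rule foldr_fac_carrier)
  have "(?F * ?R) *\<^sub>v v = ?F *\<^sub>v (?R *\<^sub>v v)" using F R v by (rule assoc_mult_mat_vec)
  also have "\<dots> = ?F *\<^sub>v (prod_list (map (\<lambda>j. (1 / (th i - th j)) * (t - th j)) xs) \<cdot>\<^sub>v v)"
    using Cons by simp
  also have "\<dots> = prod_list (map (\<lambda>j. (1 / (th i - th j)) * (t - th j)) xs) \<cdot>\<^sub>v (?F *\<^sub>v v)"
    using F v by (rule mult_mat_vec)
  also have "?F *\<^sub>v v = ((1 / (th i - th j)) * (t - th j)) \<cdot>\<^sub>v v" using B v ev by (rule fac_vec)
  finally show ?case by (simp add: smult_smult_assoc mult.commute)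
qed

lemma foldr_fac_vec_left:
  fixes B :: "'a::field mat"
  assumes B: "B \<in> carrier_mat n n" and v: "v \<in> carrier_vec n" and ev: "B\<^sup>T *\<^sub>v v = t \<cdot>\<^sub>v v"
  shows "(foldr (\<lambda>j M. ((1 / (th i - th j)) \<cdot>\<^sub>m (B - th j \<cdot>\<^sub>m 1\<^sub>m n)) * M) xs (1\<^sub>m n))\<^sup>T *\<^sub>v v
     = prod_list (map (\<lambda>j. (1 / (th i - th j)) * (t - th j)) xs) \<cdot>\<^sub>v v"
proof (induction xs)
  case Nil
  then show ?case using v by auto
next
  case (Cons j xs)
  let ?F = "(1 / (th i - th j)) \<cdot>\<^sub>m (B - th j \<cdot>\<^sub>m 1\<^sub>m n)"
  let ?R = "foldr (\<lambda>j M. ((1 / (th i - th j)) \<cdot>\<^sub>m (B - th j \<cdot>\<^sub>m 1\<^sub>m n)) * M) xs (1\<^sub>m n)"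
  have F: "?F \<in> carrier_mat n n" using B by auto
  have R: "?R \<in> carrier_mat n n" using B by (rule foldr_fac_carrier)
  have FT: "?F\<^sup>T = (1 / (th i - th j)) \<cdot>\<^sub>m (B\<^sup>T - th j \<cdot>\<^sub>m 1\<^sub>m n)"
    using B by (simp add: transpose_smult transpose_minus[of _ n n] transpose_one)
  have BT: "B\<^sup>T \<in> carrier_mat n n" using B by auto
  have "(?F * ?R)\<^sup>T *\<^sub>v v = (?R\<^sup>T * ?F\<^sup>T) *\<^sub>v v" using F R by (simp add: transpose_mult[of _ n n])
  also have "\<dots> = ?R\<^sup>T *\<^sub>v (?F\<^sup>T *\<^sub>v v)" using F R v by (intro assoc_mult_mat_vec) auto
  also have "?F\<^sup>T *\<^sub>v v = ((1 / (th i - th j)) * (t - th j)) \<cdot>\<^sub>v v" unfolding FT using BT v ev by (rule fac_vec)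
  also have "?R\<^sup>T *\<^sub>v (((1 / (th i - th j)) * (t - th j)) \<cdot>\<^sub>v v)
     = ((1 / (th i - th j)) * (t - th j)) \<cdot>\<^sub>v (?R\<^sup>T *\<^sub>v v)" using R v by (intro mult_mat_vec) auto
  finally show ?case using Cons by (simp add: smult_smult_assoc mult.commute)
qed

lemma prod_list_filter_eig:
  fixes th :: "nat \<Rightarrow> 'a::field"
  assumes inj: "inj_on th {..d}" and k: "k \<le> d" and i: "i \<le> d"
  shows "prod_list (map (\<lambda>j. (1 / (th i - th j)) * (th k - th j)) (filter (\<lambda>j. j \<noteq> i) [0..<Suc d]))
      = (if k = i then 1 else 0)"
proof -
  let ?f = "\<lambda>j. (1 / (th i - th j)) * (th k - th j)"
  have "prod_list (map ?f (filter (\<lambda>j. j \<noteq> i) [0..<Suc d])) = prod ?f (set (filter (\<lambda>j. j \<noteq> i) [0..<Suc d]))"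
    by (subst prod.distinct_set_conv_list) auto
  also have "set (filter (\<lambda>j. j \<noteq> i) [0..<Suc d]) = {..d} - {i}" by auto
  finally have eq: "prod_list (map ?f (filter (\<lambda>j. j \<noteq> i) [0..<Suc d])) = prod ?f ({..d} - {i})" .
  show ?thesis
  proof (cases "k = i")
    case True
    have "prod ?f ({..d} - {i}) = prod (\<lambda>_. 1) ({..d} - {i})"
    proof (rule prod.cong)
      fix j assume "j \<in> {..d} - {i}"
      hence "th i \<noteq> th j" using inj i by (auto dest: inj_onD)
      thus "?f j = 1" using True by simp
    qed simp
    then show ?thesis using eq True by simp
  next
    case False
    have "prod ?f ({..d} - {i}) = 0" using False k by (intro prod_zero) auto
    then show ?thesis using eq False by simp
  qed
qed

lemma prim_idem_eig:
  fixes B :: "'a::field mat"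
  assumes B: "B \<in> carrier_mat (Suc d) (Suc d)" and v: "v \<in> carrier_vec (Suc d)"
    and ev: "B *\<^sub>v v = th k \<cdot>\<^sub>v v" and inj: "inj_on th {..d}" and k: "k \<le> d" and i: "i \<le> d"
  shows "prim_idem d th B i *\<^sub>v v = (if k = i then v else 0\<^sub>v (Suc d))"
proof -
  have 1: "prim_idem d th B i *\<^sub>v v = prod_list (map (\<lambda>j. (1 / (th i - th j)) * (th k - th j)) (filter (\<lambda>j. j \<noteq> i) [0..<Suc d])) \<cdot>\<^sub>v v"
    unfolding prim_idem_def by (rule foldr_fac_vec[OF B v ev])
  show ?thesis unfolding 1 prod_list_filter_eig[OF inj k i] using v by auto
qed

lemma prim_idem_eig_left:
  fixes B :: "'a::field mat"
  assumes B: "B \<in> carrier_mat (Suc d) (Suc d)" and v: "v \<in> carrier_vec (Suc d)"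
    and ev: "B\<^sup>T *\<^sub>v v = th k \<cdot>\<^sub>v v" and inj: "inj_on th {..d}" and k: "k \<le> d" and i: "i \<le> d"
  shows "(prim_idem d th B i)\<^sup>T *\<^sub>v v = (if k = i then v else 0\<^sub>v (Suc d))"
proof -
  have 1: "(prim_idem d th B i)\<^sup>T *\<^sub>v v = prod_list (map (\<lambda>j. (1 / (th i - th j)) * (th k - th j)) (filter (\<lambda>j. j \<noteq> i) [0..<Suc d])) \<cdot>\<^sub>v v"
    unfolding prim_idem_def by (rule foldr_fac_vec_left[OF B v ev])
  show ?thesis unfolding 1 prod_list_filter_eig[OF inj k i] using v by auto
qed



lemma row_minus_index:
  "A \<in> carrier_mat n m \<Longrightarrow> B \<in> carrier_mat n m \<Longrightarrow> a < n \<Longrightarrow> b < m \<Longrightarrow>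
   (row A a - row B a) $ b = A $$ (a,b) - (B $$ (a,b) :: 'a::field)"
  by auto

lemma prim_idem_outer:
  fixes B :: "'a::field mat"
  assumes B: "B \<in> carrier_mat (Suc d) (Suc d)"
    and inj: "inj_on th {..d}" and i: "i \<le> d"
    and u: "\<And>j. j \<le> d \<Longrightarrow> u j \<in> carrier_vec (Suc d)"
    and uev: "\<And>j. j \<le> d \<Longrightarrow> B *\<^sub>v u j = ev j \<cdot>\<^sub>v u j"
    and evth: "\<And>j. j \<le> d \<Longrightarrow> \<exists>k\<le>d. ev j = th k"
    and injev: "inj_on ev {..d}"
    and basis: "\<And>v. v \<in> carrier_vec (Suc d) \<Longrightarrow> (\<forall>j\<le>d. v \<bullet> u j = 0) \<Longrightarrow> v = 0\<^sub>v (Suc d)"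
    and i0: "i0 \<le> d" "ev i0 = th i"
    and w: "w \<in> carrier_vec (Suc d)" "B\<^sup>T *\<^sub>v w = th i \<cdot>\<^sub>v w" "w \<bullet> u i0 \<noteq> 0"
  shows "prim_idem d th B i = (1 / (w \<bullet> u i0)) \<cdot>\<^sub>m outer (u i0) w"
proof -
  let ?n = "Suc d"
  let ?P = "prim_idem d th B i"
  let ?Q = "(1 / (w \<bullet> u i0)) \<cdot>\<^sub>m outer (u i0) w"
  have P: "?P \<in> carrier_mat ?n ?n" using B by (rule prim_idem_carrier)
  have Q: "?Q \<in> carrier_mat ?n ?n" using u[OF i0(1)] w by auto
  have act: "?P *\<^sub>v u j = ?Q *\<^sub>v u j" if j: "j \<le> d" for j
  proof -
    obtain k where k: "k \<le> d" "ev j = th k" using evth[OF j] by blast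
    have ki: "k = i \<longleftrightarrow> j = i0"
    proof
      assume "k = i" hence "ev j = ev i0" using k i0 by simp
      thus "j = i0" using injev j i0 by (metis atMost_iff inj_onD)
    next
      assume "j = i0" hence "th k = th i" using k i0 by simp
      thus "k = i" using inj k i by (auto dest: inj_onD)
    qed
    have Pu: "?P *\<^sub>v u j = (if k = i then u j else 0\<^sub>v ?n)"
      using prim_idem_eig[OF B u[OF j] _ inj k(1) i] uev[OF j] k by simp
    have Qu: "?Q *\<^sub>v u j = (1 / (w \<bullet> u i0)) \<cdot>\<^sub>v ((w \<bullet> u j) \<cdot>\<^sub>v u i0)"
      using u[OF i0(1)] u[OF j] w by (simp add: smult_mat_mult_vec[of _ ?n ?n] outer_mult_vec[of _ ?n])
    show ?thesis
    proof (cases "j = i0")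
      case True
      then show ?thesis using Pu Qu ki w(3) u[OF j] by (auto simp: smult_smult_assoc)
    next
      case False
      have "(B\<^sup>T *\<^sub>v w) \<bullet> u j = w \<bullet> (B *\<^sub>v u j)" by (rule transpose_vec_mult_scalar[OF B u[OF j] w(1)])
      hence "th i * (w \<bullet> u j) = ev j * (w \<bullet> u j)" using w u[OF j] uev[OF j]
        by (simp add: scalar_prod_smult_left scalar_prod_smult_right)
      moreover have "ev j \<noteq> th i" using False injev j i0 by (metis atMost_iff inj_onD)
      ultimately have "w \<bullet> u j = 0" by simp
      then show ?thesis using Pu Qu ki False u[OF i0(1)] by auto
    qed
  qed
  show ?thesis
  proof (rule eq_matI)
    fix a b assume ab: "a < dim_row ?Q" "b < dim_col ?Q"
    hence a: "a < ?n" and b: "b < ?n" using Q by auto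
    have rP: "row ?P a \<in> carrier_vec ?n" "row ?Q a \<in> carrier_vec ?n" using P Q unfolding carrier_vec_def by (auto simp: carrier_matD)
    have r: "row ?P a - row ?Q a \<in> carrier_vec ?n" using rP by auto
    have "(row ?P a - row ?Q a) \<bullet> u j = 0" if j: "j \<le> d" for j
    proof -
      have "(row ?P a - row ?Q a) \<bullet> u j = row ?P a \<bullet> u j - row ?Q a \<bullet> u j"
        using rP u[OF j] by (intro minus_scalar_prod_distrib[of _ ?n]) auto
      also have "\<dots> = (?P *\<^sub>v u j) $ a - (?Q *\<^sub>v u j) $ a" using P Q a by auto
      finally show ?thesis using act[OF j] by simp
    qed
    hence "row ?P a - row ?Q a = 0\<^sub>v ?n" using basis r by blast
    hence "(row ?P a - row ?Q a) $ b = 0" using b by simp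
    moreover have "(row ?P a - row ?Q a) $ b = ?P $$ (a,b) - ?Q $$ (a,b)"
      using a b P Q by (intro row_minus_index)
    ultimately show "?P $$ (a,b) = ?Q $$ (a,b)" by simp
  qed (use P Q in auto)
qed

lemma smult_smult_mat: "a \<cdot>\<^sub>m (b \<cdot>\<^sub>m A) = (a * b) \<cdot>\<^sub>m (A :: 'a::field mat)"
  by (auto intro!: eq_matI)

context
  fixes d :: nat and h :: "'a::field mat \<Rightarrow> 'a mat"
  assumes h: "alg_iso d h"
begin

lemma h_carrier: "X \<in> carrier_mat (Suc d) (Suc d) \<Longrightarrow> h X \<in> carrier_mat (Suc d) (Suc d)"
  using h unfolding alg_iso_def bij_betw_def by auto

lemma h_mult: "X \<in> carrier_mat (Suc d) (Suc d) \<Longrightarrow> Y \<in> carrier_mat (Suc d) (Suc d) \<Longrightarrow> h (X * Y) = h X * h Y"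
  using h unfolding alg_iso_def by auto

lemma h_add: "X \<in> carrier_mat (Suc d) (Suc d) \<Longrightarrow> Y \<in> carrier_mat (Suc d) (Suc d) \<Longrightarrow> h (X + Y) = h X + h Y"
  using h unfolding alg_iso_def by auto

lemma h_smult: "X \<in> carrier_mat (Suc d) (Suc d) \<Longrightarrow> h (c \<cdot>\<^sub>m X) = c \<cdot>\<^sub>m h X"
  using h unfolding alg_iso_def by auto

lemma h_one: "h (1\<^sub>m (Suc d)) = 1\<^sub>m (Suc d)"
  using h unfolding alg_iso_def by auto

lemma h_inj: "X \<in> carrier_mat (Suc d) (Suc d) \<Longrightarrow> Y \<in> carrier_mat (Suc d) (Suc d) \<Longrightarrow> h X = h Y \<Longrightarrow> X = Y"
  using h unfolding alg_iso_def bij_betw_def by (auto dest: inj_onD)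

lemma h_zero: "h (0\<^sub>m (Suc d) (Suc d)) = 0\<^sub>m (Suc d) (Suc d)"
proof -
  have "0\<^sub>m (Suc d) (Suc d) = (0::'a) \<cdot>\<^sub>m 1\<^sub>m (Suc d)" by (auto intro!: eq_matI)
  hence "h (0\<^sub>m (Suc d) (Suc d)) = 0 \<cdot>\<^sub>m h (1\<^sub>m (Suc d))" using h_smult by simp
  also have "\<dots> = 0\<^sub>m (Suc d) (Suc d)" by (auto simp: h_one intro!: eq_matI)
  finally show ?thesis .
qed

lemma h_minus:
  assumes X: "X \<in> carrier_mat (Suc d) (Suc d)" and Y: "Y \<in> carrier_mat (Suc d) (Suc d)"
  shows "h (X - Y) = h X - h Y"
proof -
  have "X - Y = X + (-1) \<cdot>\<^sub>m Y" using X Y by (auto intro!: eq_matI)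
  hence "h (X - Y) = h X + (-1) \<cdot>\<^sub>m h Y" using X Y by (simp add: h_add h_smult)
  also have "\<dots> = h X - h Y" using h_carrier[OF X] h_carrier[OF Y] by (auto intro!: eq_matI)
  finally show ?thesis .
qed

lemma h_foldr:
  assumes B: "B \<in> carrier_mat (Suc d) (Suc d)"
  shows "h (foldr (\<lambda>j M. ((1 / (th i - th j)) \<cdot>\<^sub>m (B - th j \<cdot>\<^sub>m 1\<^sub>m (Suc d))) * M) xs (1\<^sub>m (Suc d)))
    = foldr (\<lambda>j M. ((1 / (th i - th j)) \<cdot>\<^sub>m (h B - th j \<cdot>\<^sub>m 1\<^sub>m (Suc d))) * M) xs (1\<^sub>m (Suc d))"
proof (induction xs)
  case Nil
  then show ?case by (simp add: h_one)
next
  case (Cons j xs)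
  have R: "foldr (\<lambda>j M. ((1 / (th i - th j)) \<cdot>\<^sub>m (B - th j \<cdot>\<^sub>m 1\<^sub>m (Suc d))) * M) xs (1\<^sub>m (Suc d)) \<in> carrier_mat (Suc d) (Suc d)"
    using B by (rule foldr_fac_carrier)
  have F: "(1 / (th i - th j)) \<cdot>\<^sub>m (B - th j \<cdot>\<^sub>m 1\<^sub>m (Suc d)) \<in> carrier_mat (Suc d) (Suc d)" using B by auto
  have "h ((1 / (th i - th j)) \<cdot>\<^sub>m (B - th j \<cdot>\<^sub>m 1\<^sub>m (Suc d))) = (1 / (th i - th j)) \<cdot>\<^sub>m (h B - th j \<cdot>\<^sub>m 1\<^sub>m (Suc d))"
  proof -
    have "h (B - th j \<cdot>\<^sub>m 1\<^sub>m (Suc d)) = h B - h (th j \<cdot>\<^sub>m 1\<^sub>m (Suc d))"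
      using B by (intro h_minus) auto
    also have "h (th j \<cdot>\<^sub>m 1\<^sub>m (Suc d)) = th j \<cdot>\<^sub>m 1\<^sub>m (Suc d)" by (simp add: h_smult h_one)
    finally show ?thesis using B by (subst h_smult) auto
  qed
  then show ?case using Cons R F by (simp add: h_mult)
qed

lemma h_prim_idem:
  "B \<in> carrier_mat (Suc d) (Suc d) \<Longrightarrow> h (prim_idem d th B i) = prim_idem d th (h B) i"
  unfolding prim_idem_def by (rule h_foldr)

lemma transfer_sandwich:
  assumes E: "E \<in> carrier_mat (Suc d) (Suc d)" and M: "M \<in> carrier_mat (Suc d) (Suc d)"
    and hE: "h E = c \<cdot>\<^sub>m outer u w" and u: "u \<in> carrier_vec (Suc d)" and w: "w \<in> carrier_vec (Suc d)"
  shows "E * M * E = (c * (w \<bullet> (h M *\<^sub>v u))) \<cdot>\<^sub>m E"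
proof -
  let ?n = "Suc d"
  let ?O = "outer u w"
  have O: "?O \<in> carrier_mat ?n ?n" using u w by auto
  have hM: "h M \<in> carrier_mat ?n ?n" using M by (rule h_carrier)
  have "h (E * M * E) = h E * h M * h E"
  proof -
    have 1: "h (E * M * E) = h (E * M) * h E" using E M by (intro h_mult) auto
    have 2: "h (E * M) = h E * h M" using E M by (intro h_mult) auto
    show ?thesis by (simp only: 1 2)
  qed
  also have "\<dots> = (c * c) \<cdot>\<^sub>m (?O * h M * ?O)"
  proof -
    have OM: "?O * h M \<in> carrier_mat ?n ?n" using O hM by auto
    have 1: "(c \<cdot>\<^sub>m ?O) * h M = c \<cdot>\<^sub>m (?O * h M)" by (rule mult_smult_assoc_mat[OF O hM])
    have 2: "(c \<cdot>\<^sub>m (?O * h M)) * (c \<cdot>\<^sub>m ?O) = c \<cdot>\<^sub>m ((?O * h M) * (c \<cdot>\<^sub>m ?O))"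
      using OM O by (intro mult_smult_assoc_mat) auto
    have 3: "(?O * h M) * (c \<cdot>\<^sub>m ?O) = c \<cdot>\<^sub>m ((?O * h M) * ?O)" by (rule mult_smult_distrib[OF OM O])
    show ?thesis unfolding hE 1 2 3 by (simp only: smult_smult_mat)
  qed
  also have "\<dots> = (c * c * (w \<bullet> (h M *\<^sub>v u))) \<cdot>\<^sub>m ?O" using outer_sandwich[OF hM u w] by (simp add: smult_smult_mat)
  also have "\<dots> = h ((c * (w \<bullet> (h M *\<^sub>v u))) \<cdot>\<^sub>m E)" using E by (simp add: h_smult hE smult_smult_mat ac_simps)
  finally have hh: "h (E * M * E) = h ((c * (w \<bullet> (h M *\<^sub>v u))) \<cdot>\<^sub>m E)" .
  show ?thesis by (rule h_inj[OF _ _ hh]) (use E M in auto)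
qed

end



definition uR :: "nat \<Rightarrow> (nat \<Rightarrow> 'a::field) \<Rightarrow> (nat \<Rightarrow> 'a) \<Rightarrow> nat \<Rightarrow> 'a vec" where
  "uR d a b j = vec (Suc d) (\<lambda>k. (\<Prod>h<k. a j - a h) / (\<Prod>m\<in>{1..k}. b m))"

definition uL :: "nat \<Rightarrow> (nat \<Rightarrow> 'a::field) \<Rightarrow> (nat \<Rightarrow> 'a) \<Rightarrow> nat \<Rightarrow> 'a vec" where
  "uL d a b j = vec (Suc d) (\<lambda>k. (\<Prod>m\<in>{Suc k..d}. a j - a m) * (\<Prod>m\<in>{Suc j..k}. b m))"

lemma dim_uR[simp]: "dim_vec (uR d a b j) = Suc d" by (simp add: uR_def)
lemma dim_uL[simp]: "dim_vec (uL d a b j) = Suc d" by (simp add: uL_def)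
lemma uR_carrier[simp]: "uR d a b j \<in> carrier_vec (Suc d)" by (simp add: uR_def)
lemma uL_carrier[simp]: "uL d a b j \<in> carrier_vec (Suc d)" by (simp add: uL_def)

lemma upper_mult_vec:
  fixes v :: "'a::field vec"
  assumes v: "v \<in> carrier_vec (Suc d)" and k: "k \<le> d"
  shows "(upper_bidiag d a b *\<^sub>v v) $ k = a k * v $ k + (if k < d then b (Suc k) * v $ Suc k else 0)"
proof -
  have "(upper_bidiag d a b *\<^sub>v v) $ k = (\<Sum>c\<in>{0..<Suc d}. (if k = c then a k else if c = k + 1 then b c else 0) * v $ c)"
    using v k by (auto simp: upper_bidiag_def scalar_prod_def intro!: sum.cong)
  also have "\<dots> = (\<Sum>c\<in>{0..<Suc d}. (if c = k then a k * v $ k else 0) + (if c = Suc k then b (Suc k) * v $ Suc k else 0))"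
    by (intro sum.cong) auto
  also have "\<dots> = a k * v $ k + (if k < d then b (Suc k) * v $ Suc k else 0)"
    using k by (simp add: sum.distrib)
  finally show ?thesis .
qed

lemma upper_T_mult_vec:
  fixes v :: "'a::field vec"
  assumes v: "v \<in> carrier_vec (Suc d)" and k: "k \<le> d"
  shows "((upper_bidiag d a b)\<^sup>T *\<^sub>v v) $ k = a k * v $ k + (if 0 < k then b k * v $ (k - 1) else 0)"
proof -
  have "((upper_bidiag d a b)\<^sup>T *\<^sub>v v) $ k = (\<Sum>c\<in>{0..<Suc d}. (if c = k then a c else if k = c + 1 then b k else 0) * v $ c)"
    using v k by (auto simp: upper_bidiag_def scalar_prod_def intro!: sum.cong)
  also have "\<dots> = (\<Sum>c\<in>{0..<Suc d}. (if c = k then a k * v $ k else 0) + (if c = k - 1 \<and> 0 < k then b k * v $ (k - 1) else 0))"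
    by (intro sum.cong) auto
  also have "\<dots> = a k * v $ k + (if 0 < k then b k * v $ (k - 1) else 0)"
    using k by (simp add: sum.distrib) auto
  finally show ?thesis .
qed

lemma lower_eq: "lower_bidiag d a = (upper_bidiag d a (\<lambda>_. 1))\<^sup>T"
  by (auto simp: lower_bidiag_def upper_bidiag_def intro!: eq_matI)

lemma lower_carrier[simp]: "lower_bidiag d a \<in> carrier_mat (Suc d) (Suc d)"
  by (simp add: lower_bidiag_def)
lemma upper_carrier[simp]: "upper_bidiag d a b \<in> carrier_mat (Suc d) (Suc d)"
  by (simp add: upper_bidiag_def)

lemma dim_upper[simp]: "dim_row (upper_bidiag d a b) = Suc d" "dim_col (upper_bidiag d a b) = Suc d"
  by (simp_all add: upper_bidiag_def)
lemma dim_lower[simp]: "dim_row (lower_bidiag d a) = Suc d" "dim_col (lower_bidiag d a) = Suc d"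
  by (simp_all add: lower_bidiag_def)

lemma lower_mult_vec:
  fixes v :: "'a::field vec"
  assumes v: "v \<in> carrier_vec (Suc d)" and k: "k \<le> d"
  shows "(lower_bidiag d a *\<^sub>v v) $ k = a k * v $ k + (if 0 < k then v $ (k - 1) else 0)"
  unfolding lower_eq using upper_T_mult_vec[OF v k, of a "\<lambda>_. 1"] by simp

lemma lower_T: "(lower_bidiag d a)\<^sup>T = upper_bidiag d a (\<lambda>_. 1)"
  unfolding lower_eq by simp

lemma uR_entry: "k \<le> d \<Longrightarrow> uR d a b j $ k = (\<Prod>h<k. a j - a h) / (\<Prod>m\<in>{1..k}. b m)"
  by (simp add: uR_def)

lemma uL_entry: "k \<le> d \<Longrightarrow> uL d a b j $ k = (\<Prod>m\<in>{Suc k..d}. a j - a m) * (\<Prod>m\<in>{Suc j..k}. b m)"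
  by (simp add: uL_def)

lemma uR_supp: assumes "j < k" "k \<le> d" shows "uR d a b j $ k = 0"
proof -
  have "(\<Prod>h<k. a j - a h) = 0" using assms by (intro prod_zero) (auto intro: bexI[of _ j])
  thus ?thesis using assms by (simp add: uR_entry)
qed

lemma uL_supp: assumes "k < j" "j \<le> d" shows "uL d a b j $ k = 0"
proof -
  have "(\<Prod>m\<in>{Suc k..d}. a j - a m) = 0" using assms by (intro prod_zero) (auto intro: bexI[of _ j])
  thus ?thesis using assms by (simp add: uL_entry)
qed

lemma uR_0: "uR d a b j $ 0 = 1" by (simp add: uR_entry)

lemma uL_d: "j \<le> d \<Longrightarrow> uL d a b j $ d = (\<Prod>m\<in>{Suc j..d}. b m)" by (simp add: uL_entry)

lemma uR_diag: "j \<le> d \<Longrightarrow> uR d a b j $ j = (\<Prod>h<j. a j - a h) / (\<Prod>m\<in>{1..j}. b m)"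
  by (simp add: uR_entry)

lemma uL_diag: "j \<le> d \<Longrightarrow> uL d a b j $ j = (\<Prod>m\<in>{Suc j..d}. a j - a m)"
  by (simp add: uL_entry)

lemma uR_diag_nz:
  assumes inj: "inj_on a {..d}" and b: "\<forall>m\<in>{1..d}. b m \<noteq> 0" and j: "j \<le> d"
  shows "uR d a b j $ j \<noteq> 0"
proof -
  have "(\<Prod>h<j. a j - a h) \<noteq> 0" using inj j by (auto simp: prod_zero_iff dest: inj_onD)
  moreover have "(\<Prod>m\<in>{1..j}. b m) \<noteq> 0" using b j by (auto simp: prod_zero_iff)
  ultimately show ?thesis using j by (simp add: uR_diag)
qed

lemma uL_diag_nz:
  assumes inj: "inj_on a {..d}" and j: "j \<le> d"
  shows "uL d a b j $ j \<noteq> 0"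
proof -
  have "(\<Prod>m\<in>{Suc j..d}. a j - a m) \<noteq> 0" using inj j by (auto simp: prod_zero_iff dest: inj_onD)
  thus ?thesis using j by (simp add: uL_diag)
qed

lemma uR_eig:
  fixes a b :: "nat \<Rightarrow> 'a::field"
  assumes b: "\<forall>m\<in>{1..d}. b m \<noteq> 0" and j: "j \<le> d"
  shows "upper_bidiag d a b *\<^sub>v uR d a b j = a j \<cdot>\<^sub>v uR d a b j"
proof (rule eq_vecI)
  fix k assume "k < dim_vec (a j \<cdot>\<^sub>v uR d a b j)"
  hence k: "k \<le> d" by simp
  have e: "(upper_bidiag d a b *\<^sub>v uR d a b j) $ k = a k * uR d a b j $ k + (if k < d then b (Suc k) * uR d a b j $ Suc k else 0)"
    by (rule upper_mult_vec[OF uR_carrier k])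
  show "(upper_bidiag d a b *\<^sub>v uR d a b j) $ k = (a j \<cdot>\<^sub>v uR d a b j) $ k"
    unfolding e
  proof (cases "k < d")
    case True
    have bk: "b (Suc k) \<noteq> 0" using b True by auto
    have "uR d a b j $ Suc k = uR d a b j $ k * (a j - a k) / b (Suc k)"
      using True k by (simp add: uR_entry prod.cl_ivl_Suc)
    hence "b (Suc k) * uR d a b j $ Suc k = (a j - a k) * uR d a b j $ k" using bk by simp
    then show "a k * uR d a b j $ k + (if k < d then b (Suc k) * uR d a b j $ Suc k else 0) = (a j \<cdot>\<^sub>v uR d a b j) $ k"
      using True k by (simp add: algebra_simps)
  next
    case False
    hence kd: "k = d" using k by simp
    show "a k * uR d a b j $ k + (if k < d then b (Suc k) * uR d a b j $ Suc k else 0) = (a j \<cdot>\<^sub>v uR d a b j) $ k"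
    proof (cases "j = d")
      case True then show ?thesis using kd by simp
    next
      case False then show ?thesis using kd j by (simp add: uR_supp)
    qed
  qed
qed simp

lemma uL_eig:
  fixes a b :: "nat \<Rightarrow> 'a::field"
  assumes j: "j \<le> d"
  shows "(upper_bidiag d a b)\<^sup>T *\<^sub>v uL d a b j = a j \<cdot>\<^sub>v uL d a b j"
proof (rule eq_vecI)
  fix k assume "k < dim_vec (a j \<cdot>\<^sub>v uL d a b j)"
  hence k: "k \<le> d" by simp
  have e: "((upper_bidiag d a b)\<^sup>T *\<^sub>v uL d a b j) $ k = a k * uL d a b j $ k + (if 0 < k then b k * uL d a b j $ (k - 1) else 0)"
    by (rule upper_T_mult_vec[OF uL_carrier k])
  show "((upper_bidiag d a b)\<^sup>T *\<^sub>v uL d a b j) $ k = (a j \<cdot>\<^sub>v uL d a b j) $ k"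
    unfolding e
  proof (cases "k = 0")
    let ?G = "a k * uL d a b j $ k + (if 0 < k then b k * uL d a b j $ (k - 1) else 0) = (a j \<cdot>\<^sub>v uL d a b j) $ k"
    case True
    show ?G
    proof (cases "j = 0")
      case True then show ?G using \<open>k = 0\<close> by simp
    next
      case False then show ?G using \<open>k = 0\<close> j by (simp add: uL_supp)
    qed
  next
    case False
    let ?G = "a k * uL d a b j $ k + (if 0 < k then b k * uL d a b j $ (k - 1) else 0) = (a j \<cdot>\<^sub>v uL d a b j) $ k"
    show ?G
    proof (cases "j < k")
      case True
      have sk: "Suc (k - 1) = k" using False by simp
      define P where "P = (\<Prod>m\<in>{Suc k..d}. a j - a m)"
      define Q where "Q = (\<Prod>m\<in>{Suc j..k - 1}. b m)"
      have p1: "(\<Prod>m\<in>{k..d}. a j - a m) = (a j - a k) * P"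
        unfolding P_def by (rule prod.atLeast_Suc_atMost[OF k])
      have "uL d a b j $ (k - 1) = (\<Prod>m\<in>{Suc (k - 1)..d}. a j - a m) * Q"
        unfolding Q_def using k by (intro uL_entry) auto
      also have "{Suc (k - 1)..d} = {k..d}" using sk by simp
      finally have Lk1: "uL d a b j $ (k - 1) = (a j - a k) * P * Q" unfolding p1 .
      have "(\<Prod>m\<in>{Suc j..k}. b m) = Q * b k"
        unfolding Q_def using True prod.cl_ivl_Suc[of b "Suc j" "k - 1"] sk by simp
      hence Lk: "uL d a b j $ k = P * (Q * b k)" unfolding P_def using k by (simp add: uL_entry)
      have "a k * uL d a b j $ k + b k * uL d a b j $ (k - 1) = a j * uL d a b j $ k"
        unfolding Lk Lk1 by (simp add: algebra_simps)
      thus ?G using False k by simp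
    next
      case nt: False
      have z: "uL d a b j $ (k - 1) = 0" using False nt j by (intro uL_supp) auto
      show ?G
      proof (cases "k = j")
        case True then show ?G using z k False by simp
      next
        case False then show ?G using z k nt j \<open>k \<noteq> 0\<close> by (simp add: uL_supp)
      qed
    qed
  qed
qed simp

lemma dot_single:
  fixes x y :: "'a::field vec"
  assumes x: "x \<in> carrier_vec (Suc d)" and y: "y \<in> carrier_vec (Suc d)" and j: "j \<le> d"
    and xs: "\<And>k. j < k \<Longrightarrow> k \<le> d \<Longrightarrow> x $ k = 0" and ys: "\<And>k. k < j \<Longrightarrow> y $ k = 0"
  shows "x \<bullet> y = x $ j * y $ j" "y \<bullet> x = x $ j * y $ j"
proof -
  have "x \<bullet> y = (\<Sum>k\<in>{0..<Suc d}. x $ k * y $ k)" using y by (simp add: scalar_prod_def)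
  also have "\<dots> = (\<Sum>k\<in>{0..<Suc d}. if k = j then x $ j * y $ j else 0)"
  proof (intro sum.cong refl)
    fix k assume "k \<in> {0..<Suc d}"
    hence "k \<le> d" by simp
    thus "x $ k * y $ k = (if k = j then x $ j * y $ j else 0)"
      using xs[of k] ys[of k] by (cases "k < j"; cases "j < k") auto
  qed
  also have "\<dots> = x $ j * y $ j" using j by simp
  finally show "x \<bullet> y = x $ j * y $ j" .
  thus "y \<bullet> x = x $ j * y $ j" using comm_scalar_prod[OF y x] by simp
qed

lemma basis_upper:
  fixes u :: "nat \<Rightarrow> 'a::field vec"
  assumes u: "\<And>j. j \<le> d \<Longrightarrow> u j \<in> carrier_vec (Suc d)"
    and supp: "\<And>j k. j < k \<Longrightarrow> k \<le> d \<Longrightarrow> u j $ k = 0"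
    and diag: "\<And>j. j \<le> d \<Longrightarrow> u j $ j \<noteq> 0"
    and v: "v \<in> carrier_vec (Suc d)" and orth: "\<forall>j\<le>d. v \<bullet> u j = 0"
  shows "v = 0\<^sub>v (Suc d)"
proof -
  have "\<forall>k<j. v $ k = 0" if "j \<le> Suc d" for j
    using that
  proof (induction j)
    case 0 then show ?case by simp
  next
    case (Suc j)
    hence IH: "\<forall>k<j. v $ k = 0" and jd: "j \<le> d" by auto
    have ys: "\<And>k. k < j \<Longrightarrow> v $ k = 0" using IH by blast
    have "v \<bullet> u j = u j $ j * v $ j"
      by (rule dot_single(2)[OF u[OF jd] v jd supp[of j] ys])
    hence "v $ j = 0" using orth jd diag[OF jd] by simp
    then show ?case using IH less_Suc_eq by auto
  qed
  from this[of "Suc d"] show ?thesis using v by (intro eq_vecI) auto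
qed

lemma basis_lower:
  fixes u :: "nat \<Rightarrow> 'a::field vec"
  assumes u: "\<And>j. j \<le> d \<Longrightarrow> u j \<in> carrier_vec (Suc d)"
    and supp: "\<And>j k. k < j \<Longrightarrow> j \<le> d \<Longrightarrow> u j $ k = 0"
    and diag: "\<And>j. j \<le> d \<Longrightarrow> u j $ j \<noteq> 0"
    and v: "v \<in> carrier_vec (Suc d)" and orth: "\<forall>j\<le>d. v \<bullet> u j = 0"
  shows "v = 0\<^sub>v (Suc d)"
proof -
  have "\<forall>k. j \<le> k \<longrightarrow> k \<le> d \<longrightarrow> v $ k = 0" if "j \<le> d" for j
    using that
  proof (induction "d - j" arbitrary: j)
    case 0
    hence jd: "j = d" by simp
    have xs: "\<And>k. d < k \<Longrightarrow> k \<le> d \<Longrightarrow> v $ k = 0" by simp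
    have ys: "\<And>k. k < d \<Longrightarrow> u d $ k = 0" using supp by simp
    have "v \<bullet> u d = v $ d * u d $ d"
      by (rule dot_single(1)[OF v u[OF order.refl] order.refl xs ys])
    hence "v $ d = 0" using orth diag[OF order.refl] by simp
    then show ?case using jd by auto
  next
    case (Suc m)
    hence jd: "j \<le> d" "j < d" by auto
    have IH: "\<forall>k. Suc j \<le> k \<longrightarrow> k \<le> d \<longrightarrow> v $ k = 0" using Suc.hyps(1)[of "Suc j"] Suc.hyps(2) jd by auto
    have xs: "\<And>k. j < k \<Longrightarrow> k \<le> d \<Longrightarrow> v $ k = 0" using IH by auto
    have ys: "\<And>k. k < j \<Longrightarrow> u j $ k = 0" using supp jd by simp
    have "v \<bullet> u j = v $ j * u j $ j"
      by (rule dot_single(1)[OF v u[OF jd(1)] jd(1) xs ys])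
    hence "v $ j = 0" using orth jd diag[OF jd(1)] by simp
    then show ?case using IH by (metis le_antisym not_less_eq_eq)
  qed
  from this[of 0] show ?thesis using v by (intro eq_vecI) auto
qed



lemma dot_RL:
  assumes j: "j \<le> d"
  shows "uL d a b j \<bullet> uR d a b j = uR d a b j $ j * uL d a b j $ j"
  by (rule dot_single(2)[OF uR_carrier uL_carrier j]) (auto intro: uR_supp uL_supp j)

lemma dot_RL2:
  assumes j: "j \<le> d"
  shows "uR d a b j \<bullet> uL d a b j = uR d a b j $ j * uL d a b j $ j"
  by (rule dot_single(1)[OF uR_carrier uL_carrier j]) (auto intro: uR_supp uL_supp j)

lemma E_upper:
  fixes a b :: "nat \<Rightarrow> 'a::field"
  assumes inj: "inj_on a {..d}" and b: "\<forall>m\<in>{1..d}. b m \<noteq> 0" and j: "j \<le> d"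
  shows "prim_idem d a (upper_bidiag d a b) j = (1 / (uL d a b j \<bullet> uR d a b j)) \<cdot>\<^sub>m outer (uR d a b j) (uL d a b j)"
proof (rule prim_idem_outer[where ev = a])
  show "inj_on a {..d}" by (fact inj)
  show "j \<le> d" by (fact j)
  show "a j = a j" by simp
  show "upper_bidiag d a b \<in> carrier_mat (Suc d) (Suc d)" by simp
  show "\<And>k. k \<le> d \<Longrightarrow> uR d a b k \<in> carrier_vec (Suc d)" by simp
  show "\<And>k. k \<le> d \<Longrightarrow> upper_bidiag d a b *\<^sub>v uR d a b k = a k \<cdot>\<^sub>v uR d a b k" using b by (rule uR_eig)
  show "\<And>k. k \<le> d \<Longrightarrow> \<exists>k'\<le>d. a k = a k'" by blast
  show "\<And>v. v \<in> carrier_vec (Suc d) \<Longrightarrow> \<forall>k\<le>d. v \<bullet> uR d a b k = 0 \<Longrightarrow> v = 0\<^sub>v (Suc d)"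
    by (rule basis_upper[where u = "uR d a b"]) (simp_all add: uR_supp uR_diag_nz[OF inj b])
  show "uL d a b j \<in> carrier_vec (Suc d)" by simp
  show "(upper_bidiag d a b)\<^sup>T *\<^sub>v uL d a b j = a j \<cdot>\<^sub>v uL d a b j" using j by (rule uL_eig)
  show "uL d a b j \<bullet> uR d a b j \<noteq> 0"
    using dot_RL[OF j, of a b] uR_diag_nz[OF inj b j] uL_diag_nz[OF inj j, of b] by simp
qed (use inj j in auto)

lemma E_lower:
  fixes a th :: "nat \<Rightarrow> 'a::field"
  assumes inj: "inj_on th {..d}" and inja: "inj_on a {..d}" and ath: "\<And>j. j \<le> d \<Longrightarrow> \<exists>k\<le>d. a j = th k"
    and i: "i \<le> d" and i0: "i0 \<le> d" "a i0 = th i"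
  shows "prim_idem d th (lower_bidiag d a) i
     = (1 / (uR d a (\<lambda>_. 1) i0 \<bullet> uL d a (\<lambda>_. 1) i0)) \<cdot>\<^sub>m outer (uL d a (\<lambda>_. 1) i0) (uR d a (\<lambda>_. 1) i0)"
proof (rule prim_idem_outer[where ev = a])
  have b1: "\<forall>m\<in>{1..d}. (\<lambda>_. 1::'a) m \<noteq> 0" by simp
  show "inj_on th {..d}" "i \<le> d" "i0 \<le> d" "a i0 = th i" "inj_on a {..d}" by fact+
  show "lower_bidiag d a \<in> carrier_mat (Suc d) (Suc d)" by simp
  show "\<And>k. k \<le> d \<Longrightarrow> uL d a (\<lambda>_. 1) k \<in> carrier_vec (Suc d)" by simp
  show "\<And>k. k \<le> d \<Longrightarrow> lower_bidiag d a *\<^sub>v uL d a (\<lambda>_. 1) k = a k \<cdot>\<^sub>v uL d a (\<lambda>_. 1) k"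
    unfolding lower_eq by (rule uL_eig)
  show "\<And>k. k \<le> d \<Longrightarrow> \<exists>k'\<le>d. a k = th k'" by (rule ath)
  show "\<And>v. v \<in> carrier_vec (Suc d) \<Longrightarrow> \<forall>k\<le>d. v \<bullet> uL d a (\<lambda>_. 1) k = 0 \<Longrightarrow> v = 0\<^sub>v (Suc d)"
    by (rule basis_lower[where u = "uL d a (\<lambda>_. 1)"]) (simp_all add: uL_supp uL_diag_nz[OF inja])
  show "uR d a (\<lambda>_. 1) i0 \<in> carrier_vec (Suc d)" by simp
  show "(lower_bidiag d a)\<^sup>T *\<^sub>v uR d a (\<lambda>_. 1) i0 = th i \<cdot>\<^sub>v uR d a (\<lambda>_. 1) i0"
    unfolding lower_T using uR_eig[OF b1 i0(1), of a] i0 by simp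
  show "uR d a (\<lambda>_. 1) i0 \<bullet> uL d a (\<lambda>_. 1) i0 \<noteq> 0"
    using dot_RL2[OF i0(1), of a "\<lambda>_. 1"] uR_diag_nz[OF inja b1 i0(1)] uL_diag_nz[OF inja i0(1), of "\<lambda>_. 1"] by simp
qed

lemma lowR_supp:
  assumes "Suc j < k" "k \<le> d"
  shows "(lower_bidiag d a' *\<^sub>v uR d as b j) $ k = 0"
proof -
  have "(lower_bidiag d a' *\<^sub>v uR d as b j) $ k = a' k * uR d as b j $ k + (if 0 < k then uR d as b j $ (k - 1) else 0)"
    using assms by (intro lower_mult_vec) auto
  thus ?thesis using assms by (simp add: uR_supp)
qed

lemma lowR_top:
  assumes "j < d"
  shows "(lower_bidiag d a' *\<^sub>v uR d as b j) $ Suc j = uR d as b j $ j"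
proof -
  have "(lower_bidiag d a' *\<^sub>v uR d as b j) $ Suc j = a' (Suc j) * uR d as b j $ Suc j + (if 0 < Suc j then uR d as b j $ (Suc j - 1) else 0)"
    using assms by (intro lower_mult_vec) auto
  thus ?thesis using assms by (simp add: uR_supp)
qed

lemma chain_dot:
  fixes as b a' :: "nat \<Rightarrow> 'a::field"
  assumes j: "j < d"
  shows "uL d as b (Suc j) \<bullet> (lower_bidiag d a' *\<^sub>v uR d as b j) = uR d as b j $ j * uL d as b (Suc j) $ Suc j"
proof -
  have c: "lower_bidiag d a' *\<^sub>v uR d as b j \<in> carrier_vec (Suc d)" by (rule mult_mat_vec_carrier[OF lower_carrier uR_carrier])
  have jl: "Suc j \<le> d" using j by simp
  have xs: "\<And>k. Suc j < k \<Longrightarrow> k \<le> d \<Longrightarrow> (lower_bidiag d a' *\<^sub>v uR d as b j) $ k = 0" by (rule lowR_supp)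
  have ys: "\<And>k. k < Suc j \<Longrightarrow> uL d as b (Suc j) $ k = 0" by (rule uL_supp[OF _ jl])
  have "uL d as b (Suc j) \<bullet> (lower_bidiag d a' *\<^sub>v uR d as b j)
     = (lower_bidiag d a' *\<^sub>v uR d as b j) $ Suc j * uL d as b (Suc j) $ Suc j"
    by (rule dot_single(2)[OF c uL_carrier jl xs ys])
  also have "(lower_bidiag d a' *\<^sub>v uR d as b j) $ Suc j = uR d as b j $ j" by (rule lowR_top[OF j])
  finally show ?thesis .
qed

lemma smult_outer_vec:
  assumes "u \<in> carrier_vec n" "w \<in> carrier_vec n" "v \<in> carrier_vec n"
  shows "(c \<cdot>\<^sub>m outer u w) *\<^sub>v v = (c * (w \<bullet> v)) \<cdot>\<^sub>v (u :: 'a::field vec)"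
proof -
  have "(c \<cdot>\<^sub>m outer u w) *\<^sub>v v = c \<cdot>\<^sub>v (outer u w *\<^sub>v v)" using assms by (intro smult_mat_mult_vec[of _ n n]) auto
  also have "outer u w *\<^sub>v v = (w \<bullet> v) \<cdot>\<^sub>v u" using assms by (rule outer_mult_vec)
  finally show ?thesis by (simp add: smult_smult_assoc)
qed



lemma rec_closed:
  fixes c ph phi \<tau> \<eta> :: "nat \<Rightarrow> 'a::field"
  assumes rec: "\<And>j. j < d \<Longrightarrow> c (Suc j) * (phi (Suc j) * \<eta> (Suc j) / \<eta> j) = c j * (\<tau> j * ph (Suc j) / \<tau> (Suc j))"
    and t: "\<And>j. j \<le> d \<Longrightarrow> \<tau> j \<noteq> 0" and e: "\<And>j. j \<le> d \<Longrightarrow> \<eta> j \<noteq> 0"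
    and p: "\<forall>j\<in>{1..d}. ph j \<noteq> 0" and q: "\<forall>j\<in>{1..d}. phi j \<noteq> 0" and t0: "\<tau> 0 = 1"
  shows "i \<le> d \<Longrightarrow> c i = c 0 * ((\<Prod>j\<in>{1..i}. ph j) / (\<Prod>j\<in>{1..i}. phi j) * (\<eta> 0 / (\<tau> i * \<eta> i)))"
proof (induction i)
  case 0
  then show ?case using e[of 0] t0 by simp
next
  case (Suc i)
  hence i: "i < d" by simp
  have IH: "c i = c 0 * ((\<Prod>j\<in>{1..i}. ph j) / (\<Prod>j\<in>{1..i}. phi j) * (\<eta> 0 / (\<tau> i * \<eta> i)))"
    using Suc by simp
  have P: "(\<Prod>j\<in>{1..Suc i}. ph j) = (\<Prod>j\<in>{1..i}. ph j) * ph (Suc i)" by (simp add: prod.cl_ivl_Suc)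
  have Q: "(\<Prod>j\<in>{1..Suc i}. phi j) = (\<Prod>j\<in>{1..i}. phi j) * phi (Suc i)" by (simp add: prod.cl_ivl_Suc)
  have Qnz: "(\<Prod>j\<in>{1..i}. phi j) \<noteq> 0" using q i by (auto simp: prod_zero_iff)
  have pS: "ph (Suc i) \<noteq> 0" "phi (Suc i) \<noteq> 0" using p q i by auto
  have nz: "\<tau> i \<noteq> 0" "\<eta> i \<noteq> 0" "\<tau> (Suc i) \<noteq> 0" "\<eta> (Suc i) \<noteq> 0" using t e i by auto
  have "c (Suc i) = c i * (\<tau> i * ph (Suc i) / \<tau> (Suc i)) / (phi (Suc i) * \<eta> (Suc i) / \<eta> i)"
    using rec[OF i] nz pS by (simp add: field_simps)
  also have "\<dots> = c 0 * ((\<Prod>j\<in>{1..Suc i}. ph j) / (\<Prod>j\<in>{1..Suc i}. phi j) * (\<eta> 0 / (\<tau> (Suc i) * \<eta> (Suc i))))"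
    unfolding IH P Q using nz pS Qnz by (simp add: field_simps)
  finally show ?case .
qed

lemma eta_star_alt:
  assumes "j \<le> d"
  shows "eta_star d ths (d - j) x = (\<Prod>m\<in>{Suc j..d}. x - ths m)"
proof -
  have "eta_star d ths (d - j) x = (\<Prod>h<d - j. x - ths (d - h))" by (simp add: eta_star_def)
  also have "\<dots> = (\<Prod>m\<in>{Suc j..d}. x - ths m)"
    by (rule prod.reindex_bij_witness[where i = "\<lambda>m. d - m" and j = "\<lambda>h. d - h"]) (use assms in auto)
  finally show ?thesis .
qed



lemma rec_alg:
  fixes cj cs Rj Rs R2j R2s Lj Ls Omj Oms tj ts Pj Qj phs phis :: "'a::field"
  assumes h: "cj * ((1 / (Rs * Ls)) * (Rj * Ls)) * ((1 / (R2s * Ls)) * Oms)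
            = cs * ((1 / (R2j * Lj)) * Omj) * ((1 / (R2s * Ls)) * (R2j * Ls))"
    and Rj: "Rj = tj / Pj" and Rs: "Rs = ts / (Pj * phs)"
    and R2j: "R2j = tj / Qj" and R2s: "R2s = ts / (Qj * phis)"
    and Om: "Omj = phis * Oms"
    and nz: "tj \<noteq> 0" "ts \<noteq> 0" "Pj \<noteq> 0" "Qj \<noteq> 0" "phs \<noteq> 0" "phis \<noteq> 0" "Lj \<noteq> 0" "Ls \<noteq> 0" "Oms \<noteq> 0"
  shows "cs * (phis * Ls / Lj) = cj * (tj * phs / ts)"
proof -
  from h have "cj * (tj * phs / ts) * (Oms * Qj * phis / (ts * Ls)) = cs * (phis * Ls / Lj) * (Oms * Qj * phis / (ts * Ls))"
    unfolding Rj Rs R2j R2s Om using nz by (simp add: field_simps)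
  moreover have "Oms * Qj * phis / (ts * Ls) \<noteq> 0" using nz by simp
  ultimately show ?thesis by (metis mult_cancel_right)
qed

theorem theorem17p10:
  fixes d :: nat and A As :: "'a::field mat" and E Es :: "nat \<Rightarrow> 'a mat"
    and th ths ph phi :: "nat \<Rightarrow> 'a"
  assumes LS: "leonard_system d A As E Es"
    and th: "eig_ordering d A th" "\<forall>i\<le>d. E i = prim_idem d th A i"
    and ths: "eig_ordering d As ths" "\<forall>i\<le>d. Es i = prim_idem d ths As i"
    and ph: "split_seq d A As th ths ph"
    and phi: "split_seq d A As (\<lambda>i. th (d - i)) ths phi"
    and i: "i \<le> d"
  shows "kk d E Es i =
    (\<Prod>j\<in>{1..i}. ph j) / (\<Prod>j\<in>{1..i}. phi j) *
    (eta_star d ths d (ths 0) / (tau_star ths i (ths i) * eta_star d ths (d - i) (ths i)))"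
proof -
  let ?n = "Suc d"
  have A: "A \<in> carrier_mat ?n ?n" and As: "As \<in> carrier_mat ?n ?n"
    using LS unfolding leonard_system_def mult_free_def by auto
  have injth: "inj_on th {..d}" using th(1) unfolding eig_ordering_def bij_betw_def by auto
  have injths: "inj_on ths {..d}" using ths(1) unfolding eig_ordering_def bij_betw_def by auto
  have E0: "E 0 = prim_idem d th A 0" using th(2) by simp
  have Esj: "\<And>j. j \<le> d \<Longrightarrow> Es j = prim_idem d ths As j" using ths(2) by simp
  have E0c: "E 0 \<in> carrier_mat ?n ?n" unfolding E0 using A by (rule prim_idem_carrier)
  have Esc: "\<And>j. j \<le> d \<Longrightarrow> Es j \<in> carrier_mat ?n ?n" using Esj As prim_idem_carrier by metis
  obtain h1 where h1: "alg_iso d h1" "h1 A = lower_bidiag d th" "h1 As = upper_bidiag d ths ph"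
    and phnz: "\<forall>j\<in>{1..d}. ph j \<noteq> 0" using ph unfolding split_seq_def by auto
  let ?a' = "(\<lambda>i. th (d - i))"
  obtain h2 where h2: "alg_iso d h2" "h2 A = lower_bidiag d ?a'" "h2 As = upper_bidiag d ths phi"
    and phinz: "\<forall>j\<in>{1..d}. phi j \<noteq> 0" using phi unfolding split_seq_def by auto
  have b1: "\<forall>m\<in>{1..d}. (\<lambda>_. 1::'a) m \<noteq> 0" by simp

  define x where "x = uL d th (\<lambda>_. 1::'a) 0"
  define w where "w = uR d th (\<lambda>_. 1::'a) 0"
  define K1 where "K1 = 1 / (w \<bullet> x)"
  have h1E0: "h1 (E 0) = K1 \<cdot>\<^sub>m outer x w"
    unfolding E0 h_prim_idem[OF h1(1) A] h1(2) K1_def x_def w_def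
    by (rule E_lower[OF injth injth _ le0 le0 refl]) auto
  define R where "R = uR d ths ph"
  define Lw where "Lw = uL d ths ph"
  have h1Es: "h1 (Es j) = (1 / (Lw j \<bullet> R j)) \<cdot>\<^sub>m outer (R j) (Lw j)" if "j \<le> d" for j
    unfolding Esj[OF that] h_prim_idem[OF h1(1) As] h1(3) R_def Lw_def
    by (rule E_upper[OF injths phnz that])

  have inja: "inj_on ?a' {..d}"
  proof (rule inj_onI)
    fix p q assume "p \<in> {..d}" "q \<in> {..d}" "?a' p = ?a' q"
    hence "d - p = d - q" using injth by (auto dest: inj_onD)
    thus "p = q" using \<open>p \<in> {..d}\<close> \<open>q \<in> {..d}\<close> by auto
  qed
  have ath2: "\<exists>k\<le>d. ?a' j = th k" if "j \<le> d" for j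
    by (rule exI[of _ "d - j"]) simp
  have thd: "?a' d = th 0" by simp
  define e where "e = uL d ?a' (\<lambda>_. 1::'a) d"
  define y where "y = uR d ?a' (\<lambda>_. 1::'a) d"
  define K2 where "K2 = 1 / (y \<bullet> e)"
  have h2E0: "h2 (E 0) = K2 \<cdot>\<^sub>m outer e y"
    unfolding E0 h_prim_idem[OF h2(1) A] h2(2) K2_def e_def y_def
    by (rule E_lower[OF injth inja ath2 le0 order.refl thd])
  define R2 where "R2 = uR d ths phi"
  define Lw2 where "Lw2 = uL d ths phi"
  have h2Es: "h2 (Es j) = (1 / (Lw2 j \<bullet> R2 j)) \<cdot>\<^sub>m outer (R2 j) (Lw2 j)" if "j \<le> d" for j
    unfolding Esj[OF that] h_prim_idem[OF h2(1) As] h2(3) R2_def Lw2_def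
    by (rule E_upper[OF injths phinz that])

  have xc: "x \<in> carrier_vec ?n" "w \<in> carrier_vec ?n" "e \<in> carrier_vec ?n" "y \<in> carrier_vec ?n"
    unfolding x_def w_def e_def y_def by auto
  have T1: "E 0 * M * E 0 = (K1 * (w \<bullet> (h1 M *\<^sub>v x))) \<cdot>\<^sub>m E 0" if "M \<in> carrier_mat ?n ?n" for M
    by (rule transfer_sandwich[OF h1(1) E0c that h1E0 xc(1,2)])
  have T2: "E 0 * M * E 0 = (K2 * (y \<bullet> (h2 M *\<^sub>v e))) \<cdot>\<^sub>m E 0" if "M \<in> carrier_mat ?n ?n" for M
    by (rule transfer_sandwich[OF h2(1) E0c that h2E0 xc(3,4)])
  have wx: "w \<bullet> x = w $ 0 * x $ 0" unfolding w_def x_def by (rule dot_RL2) simp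
  have w0: "w $ 0 = 1" unfolding w_def by (rule uR_0)
  have x0: "x $ 0 \<noteq> 0" unfolding x_def by (rule uL_diag_nz[OF injth]) simp
  have E0nz: "E 0 \<noteq> 0\<^sub>m ?n ?n"
  proof
    assume "E 0 = 0\<^sub>m ?n ?n"
    hence "h1 (E 0) = 0\<^sub>m ?n ?n" using h_zero[OF h1(1)] by simp
    hence "(K1 \<cdot>\<^sub>m outer x w) $$ (0,0) = 0" unfolding h1E0 by simp
    moreover have "(K1 \<cdot>\<^sub>m outer x w) $$ (0,0) = K1 * (x $ 0 * w $ 0)"
      using xc by (simp add: outer_def)
    ultimately show False using wx w0 x0 unfolding K1_def by simp
  qed
  have trace: "mtrace (M * E 0) = K1 * (w \<bullet> (h1 M *\<^sub>v x))" "mtrace (M * E 0) = K2 * (y \<bullet> (h2 M *\<^sub>v e))"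
    if M: "M \<in> carrier_mat ?n ?n" for M
    using rank_one_trace[OF E0c E0nz _ M] T1 T2 M by blast+

  define c where "c j = mtrace (Es j * E 0)" for j
  have Rc: "R j \<in> carrier_vec ?n" "Lw j \<in> carrier_vec ?n" "R2 j \<in> carrier_vec ?n" "Lw2 j \<in> carrier_vec ?n" for j
    unfolding R_def Lw_def R2_def Lw2_def by auto
  have Ev1: "h1 (Es j) *\<^sub>v v = ((1 / (Lw j \<bullet> R j)) * (Lw j \<bullet> v)) \<cdot>\<^sub>v R j"
    if "j \<le> d" "v \<in> carrier_vec ?n" for j v
    unfolding h1Es[OF that(1)] by (rule smult_outer_vec[OF Rc(1) Rc(2) that(2)])
  have Ev2: "h2 (Es j) *\<^sub>v v = ((1 / (Lw2 j \<bullet> R2 j)) * (Lw2 j \<bullet> v)) \<cdot>\<^sub>v R2 j"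
    if "j \<le> d" "v \<in> carrier_vec ?n" for j v
    unfolding h2Es[OF that(1)] by (rule smult_outer_vec[OF Rc(3) Rc(4) that(2)])
  have wR: "w \<bullet> R j = 1" for j
  proof -
    have "w \<bullet> R j = w $ 0 * R j $ 0"
      by (rule dot_single(1)[OF xc(2) Rc(1) le0]) (auto simp: w_def intro: uR_supp)
    thus ?thesis using w0 by (simp add: R_def uR_0)
  qed
  define \<alpha> where "\<alpha> j = (1 / (Lw j \<bullet> R j)) * (Lw j \<bullet> x)" for j
  define \<alpha>' where "\<alpha>' j = (1 / (Lw2 j \<bullet> R2 j)) * (Lw2 j \<bullet> e)" for j
  have c1: "c j = K1 * \<alpha> j" if j: "j \<le> d" for j
  proof -
    have "c j = K1 * (w \<bullet> (h1 (Es j) *\<^sub>v x))" unfolding c_def by (rule trace(1)[OF Esc[OF j]])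
    also have "w \<bullet> (h1 (Es j) *\<^sub>v x) = \<alpha> j * (w \<bullet> R j)"
      unfolding Ev1[OF j xc(1)] \<alpha>_def using xc Rc by (simp add: scalar_prod_smult_right)
    finally show ?thesis using wR by simp
  qed
  have c2: "c j = K2 * (\<alpha>' j * (y \<bullet> R2 j))" if j: "j \<le> d" for j
  proof -
    have "c j = K2 * (y \<bullet> (h2 (Es j) *\<^sub>v e))" unfolding c_def by (rule trace(2)[OF Esc[OF j]])
    also have "y \<bullet> (h2 (Es j) *\<^sub>v e) = \<alpha>' j * (y \<bullet> R2 j)"
      unfolding Ev2[OF j xc(3)] \<alpha>'_def using xc Rc by (simp add: scalar_prod_smult_right)
    finally show ?thesis .
  qed
  define \<beta> where "\<beta> j = (1 / (Lw (Suc j) \<bullet> R (Suc j))) * (Lw (Suc j) \<bullet> (lower_bidiag d th *\<^sub>v R j))" for j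
  define \<beta>' where "\<beta>' j = (1 / (Lw2 (Suc j) \<bullet> R2 (Suc j))) * (Lw2 (Suc j) \<bullet> (lower_bidiag d ?a' *\<^sub>v R2 j))" for j
  have step: "c j * \<beta> j * \<alpha>' (Suc j) = c (Suc j) * \<alpha>' j * \<beta>' j" if j: "j < d" for j
  proof -
    have jd: "j \<le> d" "Suc j \<le> d" using j by auto
    define M where "M = Es (Suc j) * A * Es j"
    have M: "M \<in> carrier_mat ?n ?n" unfolding M_def using Esc[OF jd(1)] Esc[OF jd(2)] A by auto
    have LRc: "lower_bidiag d th *\<^sub>v R j \<in> carrier_vec ?n" "lower_bidiag d ?a' *\<^sub>v R2 j \<in> carrier_vec ?n"
      by (rule mult_mat_vec_carrier[OF lower_carrier Rc(1)], rule mult_mat_vec_carrier[OF lower_carrier Rc(3)])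
    have h1M: "h1 M *\<^sub>v x = (\<alpha> j * \<beta> j) \<cdot>\<^sub>v R (Suc j)"
    proof -
      have "h1 M = h1 (Es (Suc j)) * lower_bidiag d th * h1 (Es j)"
        unfolding M_def using Esc[OF jd(1)] Esc[OF jd(2)] A h1(2)
        by (simp add: h_mult[OF h1(1)] del: assoc_mult_mat)
      hence "h1 M *\<^sub>v x = h1 (Es (Suc j)) *\<^sub>v (lower_bidiag d th *\<^sub>v (h1 (Es j) *\<^sub>v x))"
        using h_carrier[OF h1(1) Esc[OF jd(1)]] h_carrier[OF h1(1) Esc[OF jd(2)]] xc(1)
        by (simp add: assoc_mult_mat_vec[of _ ?n ?n _ ?n] del: assoc_mult_mat)
      also have "h1 (Es j) *\<^sub>v x = \<alpha> j \<cdot>\<^sub>v R j" unfolding Ev1[OF jd(1) xc(1)] \<alpha>_def ..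
      also have "lower_bidiag d th *\<^sub>v (\<alpha> j \<cdot>\<^sub>v R j) = \<alpha> j \<cdot>\<^sub>v (lower_bidiag d th *\<^sub>v R j)"
        by (rule mult_mat_vec[OF lower_carrier Rc(1)])
      also have "h1 (Es (Suc j)) *\<^sub>v (\<alpha> j \<cdot>\<^sub>v (lower_bidiag d th *\<^sub>v R j)) = \<alpha> j \<cdot>\<^sub>v (h1 (Es (Suc j)) *\<^sub>v (lower_bidiag d th *\<^sub>v R j))"
        by (rule mult_mat_vec[OF h_carrier[OF h1(1) Esc[OF jd(2)]] LRc(1)])
      also have "h1 (Es (Suc j)) *\<^sub>v (lower_bidiag d th *\<^sub>v R j) = \<beta> j \<cdot>\<^sub>v R (Suc j)"
        unfolding Ev1[OF jd(2) LRc(1)] \<beta>_def ..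
      finally show ?thesis by (simp add: smult_smult_assoc)
    qed
    have h2M: "h2 M *\<^sub>v e = (\<alpha>' j * \<beta>' j) \<cdot>\<^sub>v R2 (Suc j)"
    proof -
      have "h2 M = h2 (Es (Suc j)) * lower_bidiag d ?a' * h2 (Es j)"
        unfolding M_def using Esc[OF jd(1)] Esc[OF jd(2)] A h2(2)
        by (simp add: h_mult[OF h2(1)] del: assoc_mult_mat)
      hence "h2 M *\<^sub>v e = h2 (Es (Suc j)) *\<^sub>v (lower_bidiag d ?a' *\<^sub>v (h2 (Es j) *\<^sub>v e))"
        using h_carrier[OF h2(1) Esc[OF jd(1)]] h_carrier[OF h2(1) Esc[OF jd(2)]] xc(3)
        by (simp add: assoc_mult_mat_vec[of _ ?n ?n _ ?n] del: assoc_mult_mat)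
      also have "h2 (Es j) *\<^sub>v e = \<alpha>' j \<cdot>\<^sub>v R2 j" unfolding Ev2[OF jd(1) xc(3)] \<alpha>'_def ..
      also have "lower_bidiag d ?a' *\<^sub>v (\<alpha>' j \<cdot>\<^sub>v R2 j) = \<alpha>' j \<cdot>\<^sub>v (lower_bidiag d ?a' *\<^sub>v R2 j)"
        by (rule mult_mat_vec[OF lower_carrier Rc(3)])
      also have "h2 (Es (Suc j)) *\<^sub>v (\<alpha>' j \<cdot>\<^sub>v (lower_bidiag d ?a' *\<^sub>v R2 j)) = \<alpha>' j \<cdot>\<^sub>v (h2 (Es (Suc j)) *\<^sub>v (lower_bidiag d ?a' *\<^sub>v R2 j))"
        by (rule mult_mat_vec[OF h_carrier[OF h2(1) Esc[OF jd(2)]] LRc(2)])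
      also have "h2 (Es (Suc j)) *\<^sub>v (lower_bidiag d ?a' *\<^sub>v R2 j) = \<beta>' j \<cdot>\<^sub>v R2 (Suc j)"
        unfolding Ev2[OF jd(2) LRc(2)] \<beta>'_def ..
      finally show ?thesis by (simp add: smult_smult_assoc)
    qed
    have "mtrace (M * E 0) = K1 * (\<alpha> j * \<beta> j)"
      using trace(1)[OF M] h1M wR xc Rc by (simp add: scalar_prod_smult_right)
    moreover have "mtrace (M * E 0) = K2 * (\<alpha>' j * \<beta>' j * (y \<bullet> R2 (Suc j)))"
      using trace(2)[OF M] h2M xc Rc by (simp add: scalar_prod_smult_right)
    ultimately have "K1 * (\<alpha> j * \<beta> j) = K2 * (\<alpha>' j * \<beta>' j * (y \<bullet> R2 (Suc j)))" by simp
    hence "c j * \<beta> j = K2 * (\<alpha>' j * \<beta>' j * (y \<bullet> R2 (Suc j)))" using c1[OF jd(1)] by (simp add: ac_simps)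
    hence "c j * \<beta> j * \<alpha>' (Suc j) = (K2 * (\<alpha>' (Suc j) * (y \<bullet> R2 (Suc j)))) * \<alpha>' j * \<beta>' j"
      by (simp add: ac_simps)
    thus ?thesis using c2[OF jd(2)] by simp
  qed
  define \<tau> where "\<tau> j = (\<Prod>h<j. ths j - ths h)" for j
  define \<eta> where "\<eta> j = (\<Prod>m\<in>{Suc j..d}. ths j - ths m)" for j
  define \<Phi> where "\<Phi> j = (\<Prod>m\<in>{1..j}. ph m)" for j
  define \<Psi> where "\<Psi> j = (\<Prod>m\<in>{1..j}. phi m)" for j
  define \<Omega> where "\<Omega> j = (\<Prod>m\<in>{Suc j..d}. phi m)" for j
  have \<tau>nz: "\<tau> j \<noteq> 0" if "j \<le> d" for j
    unfolding \<tau>_def using injths that by (auto simp: prod_zero_iff dest: inj_onD)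
  have \<eta>nz: "\<eta> j \<noteq> 0" if "j \<le> d" for j
    unfolding \<eta>_def using injths that by (auto simp: prod_zero_iff dest: inj_onD)
  have \<Phi>nz: "\<Phi> j \<noteq> 0" if "j \<le> d" for j
    unfolding \<Phi>_def using phnz that by (auto simp: prod_zero_iff)
  have \<Psi>nz: "\<Psi> j \<noteq> 0" if "j \<le> d" for j
    unfolding \<Psi>_def using phinz that by (auto simp: prod_zero_iff)
  have \<Omega>nz: "\<Omega> j \<noteq> 0" for j
    unfolding \<Omega>_def using phinz by (auto simp: prod_zero_iff)
  have Rjj: "R j $ j = \<tau> j / \<Phi> j" "R2 j $ j = \<tau> j / \<Psi> j" "Lw j $ j = \<eta> j" "Lw2 j $ j = \<eta> j"
    "Lw2 j $ d = \<Omega> j" if "j \<le> d" for j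
    unfolding R_def R2_def Lw_def Lw2_def \<tau>_def \<Phi>_def \<Psi>_def \<eta>_def \<Omega>_def using that
    by (simp_all add: uR_diag uL_diag uL_d)
  have ed: "e $ d = 1" unfolding e_def by (simp add: uL_d)
  have Lw2e: "Lw2 j \<bullet> e = \<Omega> j" if "j \<le> d" for j
  proof -
    have "Lw2 j \<bullet> e = Lw2 j $ d * e $ d"
      by (rule dot_single(1)[OF Rc(4) xc(3) order.refl]) (auto simp: e_def intro: uL_supp)
    thus ?thesis using ed Rjj(5)[OF that] by simp
  qed
  have N1: "Lw j \<bullet> R j = R j $ j * Lw j $ j" if "j \<le> d" for j
    unfolding R_def Lw_def using that by (rule dot_RL)
  have N2: "Lw2 j \<bullet> R2 j = R2 j $ j * Lw2 j $ j" if "j \<le> d" for j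
    unfolding R2_def Lw2_def using that by (rule dot_RL)
  have rec: "c (Suc j) * (phi (Suc j) * \<eta> (Suc j) / \<eta> j) = c j * (\<tau> j * ph (Suc j) / \<tau> (Suc j))"
    if j: "j < d" for j
  proof (rule rec_alg[where Rj = "R j $ j" and Rs = "R (Suc j) $ Suc j" and R2j = "R2 j $ j"
        and R2s = "R2 (Suc j) $ Suc j" and Omj = "\<Omega> j" and Oms = "\<Omega> (Suc j)" and Pj = "\<Phi> j" and Qj = "\<Psi> j"])
    have jd: "j \<le> d" "Suc j \<le> d" using j by auto
    have ch1: "Lw (Suc j) \<bullet> (lower_bidiag d th *\<^sub>v R j) = R j $ j * Lw (Suc j) $ Suc j"
      unfolding R_def Lw_def by (rule chain_dot[OF j])
    have ch2: "Lw2 (Suc j) \<bullet> (lower_bidiag d ?a' *\<^sub>v R2 j) = R2 j $ j * Lw2 (Suc j) $ Suc j"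
      unfolding R2_def Lw2_def by (rule chain_dot[OF j])
    have b: "\<beta> j = (1 / (R (Suc j) $ Suc j * \<eta> (Suc j))) * (R j $ j * \<eta> (Suc j))"
      unfolding \<beta>_def N1[OF jd(2)] ch1 Rjj(3)[OF jd(2)] by simp
    have b': "\<beta>' j = (1 / (R2 (Suc j) $ Suc j * \<eta> (Suc j))) * (R2 j $ j * \<eta> (Suc j))"
      unfolding \<beta>'_def N2[OF jd(2)] ch2 Rjj(4)[OF jd(2)] by simp
    have a1: "\<alpha>' j = (1 / (R2 j $ j * \<eta> j)) * \<Omega> j"
      unfolding \<alpha>'_def N2[OF jd(1)] Rjj(4)[OF jd(1)] Lw2e[OF jd(1)] ..
    have a2: "\<alpha>' (Suc j) = (1 / (R2 (Suc j) $ Suc j * \<eta> (Suc j))) * \<Omega> (Suc j)"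
      unfolding \<alpha>'_def N2[OF jd(2)] Rjj(4)[OF jd(2)] Lw2e[OF jd(2)] ..
    show "c j * ((1 / (R (Suc j) $ Suc j * \<eta> (Suc j))) * (R j $ j * \<eta> (Suc j))) *
        ((1 / (R2 (Suc j) $ Suc j * \<eta> (Suc j))) * \<Omega> (Suc j))
      = c (Suc j) * ((1 / (R2 j $ j * \<eta> j)) * \<Omega> j) *
        ((1 / (R2 (Suc j) $ Suc j * \<eta> (Suc j))) * (R2 j $ j * \<eta> (Suc j)))"
      using step[OF j] unfolding b b' a1 a2 .
    show "R j $ j = \<tau> j / \<Phi> j" "R2 j $ j = \<tau> j / \<Psi> j" using Rjj jd by auto
    show "R (Suc j) $ Suc j = \<tau> (Suc j) / (\<Phi> j * ph (Suc j))"
      using Rjj(1)[OF jd(2)] by (simp add: \<Phi>_def prod.cl_ivl_Suc)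
    show "R2 (Suc j) $ Suc j = \<tau> (Suc j) / (\<Psi> j * phi (Suc j))"
      using Rjj(2)[OF jd(2)] by (simp add: \<Psi>_def prod.cl_ivl_Suc)
    show "\<Omega> j = phi (Suc j) * \<Omega> (Suc j)"
      unfolding \<Omega>_def by (rule prod.atLeast_Suc_atMost[OF jd(2)])
    show "\<tau> j \<noteq> 0" "\<tau> (Suc j) \<noteq> 0" "\<Phi> j \<noteq> 0" "\<Psi> j \<noteq> 0" "\<eta> j \<noteq> 0" "\<eta> (Suc j) \<noteq> 0" "\<Omega> (Suc j) \<noteq> 0"
      using \<tau>nz \<Phi>nz \<Psi>nz \<eta>nz \<Omega>nz jd by auto
    show "ph (Suc j) \<noteq> 0" "phi (Suc j) \<noteq> 0" using phnz phinz jd by auto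
  qed
  have \<tau>0: "\<tau> 0 = 1" by (simp add: \<tau>_def)
  have closed: "c i = c 0 * ((\<Prod>j\<in>{1..i}. ph j) / (\<Prod>j\<in>{1..i}. phi j) * (\<eta> 0 / (\<tau> i * \<eta> i)))"
    by (rule rec_closed[where c = c and ph = ph and phi = phi and \<tau> = \<tau> and \<eta> = \<eta>, OF rec \<tau>nz \<eta>nz phnz phinz \<tau>0 i])
  have c0: "c 0 \<noteq> 0"
  proof -
    have ye: "y \<bullet> e = y $ d * e $ d" unfolding y_def e_def by (rule dot_RL2) simp
    have yd: "y $ d \<noteq> 0" unfolding y_def by (rule uR_diag_nz[OF inja b1]) simp
    have yR: "y \<bullet> R2 0 = R2 0 $ 0 * y $ 0"
      by (rule dot_single(2)[OF Rc(3) xc(4) le0]) (auto simp: R2_def intro: uR_supp)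
    have yR1: "y \<bullet> R2 0 = 1" using yR by (simp add: R2_def y_def uR_0)
    have "\<alpha>' 0 = (1 / (R2 0 $ 0 * \<eta> 0)) * \<Omega> 0"
      unfolding \<alpha>'_def N2[OF le0] Rjj(4)[OF le0] Lw2e[OF le0] ..
    moreover have "R2 0 $ 0 = 1" by (simp add: R2_def uR_0)
    ultimately have "\<alpha>' 0 \<noteq> 0" using \<eta>nz[OF le0] \<Omega>nz[of 0] by simp
    thus ?thesis using c2[OF le0] yR1 ye ed yd unfolding K2_def by simp
  qed
  have tr0: "mtrace (E 0 * Es 0) = c 0" unfolding c_def by (rule mtrace_comm[OF E0c Esc[OF le0]])
  have "kk d E Es i = inverse (c 0) * c i" unfolding kk_def nu_def tr0 c_def ..
  also have "\<dots> = (\<Prod>j\<in>{1..i}. ph j) / (\<Prod>j\<in>{1..i}. phi j) * (\<eta> 0 / (\<tau> i * \<eta> i))"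
    unfolding closed using c0 by (simp add: field_simps)
  also have "\<eta> 0 = eta_star d ths d (ths 0)" using eta_star_alt[of 0 d ths "ths 0"] by (simp add: \<eta>_def)
  also have "\<eta> i = eta_star d ths (d - i) (ths i)" using eta_star_alt[OF i, of ths "ths i"] by (simp add: \<eta>_def)
  also have "\<tau> i = tau_star ths i (ths i)" by (simp add: \<tau>_def tau_star_def)
  finally show ?thesis .
qed


end
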